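(* Let $\varLambda\subseteq\mathbb{R}$ be uniformly discrete, and let $\mathcal{A}=(A_n)_n$ be a van Hove sequence of intervals with $\mathrm{card}(F_n)\to\infty$, where $F_n=\varLambda\cap A_n$. Then for all $t\in\varLambda-\varLambda$, \[\lim_{n\to\infty}\frac{\mathrm{card}(\varLambda\cap(-t+\varLambda)\cap A_n)-\mathrm{card}(F_n\cap(-t+F_n))}{\mathrm{card}(F_n)}=0.\] In particular, if $\varLambda$ has finite local complexity, then the counting autocorrelation $\gamma_{\mathrm{count}}$ of $\varLambda$ exists with respect to $\mathcal{A}$ if and only if for all $t\in\mathbb{R}$ the limit \[\eta_{\mathrm{count}}(t)=\lim_{n\to\infty}\frac{\mathrm{card}(F_n\cap(-t+\varLambda))}{\mathrm{card}(F_n)}\] exists; and in this case $\gamma_{\mathrm{count}}=\sum_{t\in\varLambda-\varLambda}\eta_{\mathrm{count}}(t)\delta_t$.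
   Context: Uniformly discrete: there is $r>0$ with $|x-y|\ge r$ for all distinct $x,y\in\varLambda$. Finite local complexity: $\varLambda-\varLambda$ is locally finite. A sequence of intervals $([a_n,b_n])_n$ is van Hove iff $b_n-a_n\to\infty$. For finite $F$, $\gamma_F=\frac{1}{\mathrm{card}(F)}\sum_{x,y\in F}\delta_{x-y}$ if $F\ne\emptyset$, $\gamma_\emptyset=0$; the counting autocorrelation is the vague limit of $\gamma_{F_n}$. *)

theory Defs
  imports "HOL-Analysis.Analysis"
begin

definition uniformly_discrete :: "real set \<Rightarrow> bool" where
  "uniformly_discrete \<Lambda> \<longleftrightarrow> (\<exists>r>0. \<forall>x\<in>\<Lambda>. \<forall>y\<in>\<Lambda>. x \<noteq> y \<longrightarrow> \<bar>x - y\<bar> \<ge> r)"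

definition diffset :: "real set \<Rightarrow> real set" where
  "diffset \<Lambda> = {x - y | x y. x \<in> \<Lambda> \<and> y \<in> \<Lambda>}"

definition finite_local_complexity :: "real set \<Rightarrow> bool" where
  "finite_local_complexity \<Lambda> \<longleftrightarrow> (\<forall>K. compact K \<longrightarrow> finite (K \<inter> diffset \<Lambda>))"

text \<open>gamma_F = (1/card F) * sum over x,y in F of delta_(x-y), and gamma_{} = 0, as a Borel measure.\<close>
definition autocorr_measure :: "real set \<Rightarrow> real measure" where
  "autocorr_measure F = measure_of UNIV (sets borel)
     (\<lambda>A. if F = {} then 0
          else ennreal (real (card {(x, y). x \<in> F \<and> y \<in> F \<and> x - y \<in> A}) / real (card F)))"

definition radon_measure :: "real measure \<Rightarrow> bool" where
  "radon_measure \<mu> \<longleftrightarrow> sets \<mu> = sets borel \<and> (\<forall>K. compact K \<longrightarrow> emeasure \<mu> K < \<infinity>)"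

definition vague_limit :: "(nat \<Rightarrow> real measure) \<Rightarrow> real measure \<Rightarrow> bool" where
  "vague_limit \<mu>s \<mu> \<longleftrightarrow> radon_measure \<mu> \<and>
     (\<forall>f :: real \<Rightarrow> real. continuous_on UNIV f \<and> compact (closure {x. f x \<noteq> 0}) \<longrightarrow>
        (\<lambda>n. integral\<^sup>L (\<mu>s n) f) \<longlonglongrightarrow> integral\<^sup>L \<mu> f)"

end

theory Submission
  imports Defs
begin

lemma autocorr_eq:
  assumes fin: "finite F" and ne: "F \<noteq> {}"
  shows "autocorr_measure F = distr (density (count_space (F \<times> F)) (\<lambda>_. ennreal (1 / real (card F)))) borel (\<lambda>p. fst p - snd p)"
    (is "_ = ?R")
proof -
  have sp: "space ?R = UNIV" and st: "sets ?R = sets borel" by auto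
  have "?R = measure_of (space ?R) (sets ?R) (emeasure ?R)" by (rule measure_of_of_measure[symmetric])
  also have "\<dots> = measure_of UNIV (sets borel) (emeasure ?R)" by (simp only: sp st)
  finally have R: "?R = measure_of UNIV (sets borel) (emeasure ?R)" .
  have "autocorr_measure F = measure_of UNIV (sets borel) (emeasure ?R)"
    unfolding autocorr_measure_def
  proof (rule measure_of_eq)
    show "sets borel \<subseteq> Pow UNIV" by auto
    fix A :: "real set" assume "A \<in> sigma_sets UNIV (sets borel)"
    then have A: "A \<in> sets borel" by (metis sets.sigma_sets_eq space_borel)
    have B: "{(x, y). x \<in> F \<and> y \<in> F \<and> x - y \<in> A} = (\<lambda>p. fst p - snd p) -` A \<inter> space (density (count_space (F \<times> F)) (\<lambda>_. ennreal (1 / real (card F))))"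
      by auto
    have finB: "finite {(x, y). x \<in> F \<and> y \<in> F \<and> x - y \<in> A}"
      by (rule finite_subset[of _ "F \<times> F"]) (use fin in auto)
    have meas: "(\<lambda>p. fst p - snd p) \<in> measurable (density (count_space (F \<times> F)) (\<lambda>_. ennreal (1 / real (card F)))) borel"
      by (subst measurable_cong_sets[OF sets_density refl]) simp
    have "emeasure ?R A = emeasure (density (count_space (F \<times> F)) (\<lambda>_. ennreal (1 / real (card F)))) {(x, y). x \<in> F \<and> y \<in> F \<and> x - y \<in> A}"
      using emeasure_distr[OF meas A] B by simp
    also have "\<dots> = ennreal (1 / real (card F)) * emeasure (count_space (F \<times> F)) {(x, y). x \<in> F \<and> y \<in> F \<and> x - y \<in> A}"
      by (rule emeasure_density_const) auto
    also have "\<dots> = ennreal (real (card {(x, y). x \<in> F \<and> y \<in> F \<and> x - y \<in> A}) / real (card F))"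
    proof -
      have e: "ennreal (1 / real (card F)) * of_nat k = ennreal (real k / real (card F))" for k :: nat
      proof -
        have "ennreal (1 / real (card F)) * of_nat k = ennreal (1 / real (card F)) * ennreal (real k)"
          by (simp add: ennreal_of_nat_eq_real_of_nat)
        also have "\<dots> = ennreal (1 / real (card F) * real k)" by (rule ennreal_mult[symmetric]) auto
        finally show ?thesis by simp
      qed
      show ?thesis using finB by (subst emeasure_count_space_finite) (auto simp: e)
    qed
    finally show "(if F = {} then 0 else ennreal (real (card {(x, y). x \<in> F \<and> y \<in> F \<and> x - y \<in> A}) / real (card F))) = emeasure ?R A"
      using ne by simp
  qed
  with R show ?thesis by simp
qed

lemma autocorr_integral:
  assumes fin: "finite F" and f: "f \<in> borel_measurable borel"
  shows "integral\<^sup>L (autocorr_measure F) f = (\<Sum>p\<in>F \<times> F. f (fst p - snd p)) / real (card F)"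
proof (cases "F = {}")
  case True
  then have "autocorr_measure F = null_measure borel" by (simp add: autocorr_measure_def null_measure_def)
  then show ?thesis using True by simp
next
  case False
  have "integral\<^sup>L (autocorr_measure F) f = integral\<^sup>L (density (count_space (F \<times> F)) (\<lambda>_. ennreal (1 / real (card F)))) (\<lambda>p. f (fst p - snd p))"
    unfolding autocorr_eq[OF fin False] by (rule integral_distr) (auto simp: f)
  also have "\<dots> = integral\<^sup>L (count_space (F \<times> F)) (\<lambda>p. (1 / real (card F)) *\<^sub>R f (fst p - snd p))"
    by (subst integral_density[symmetric]) (auto simp: f)
  also have "\<dots> = (\<Sum>p\<in>F \<times> F. f (fst p - snd p)) / real (card F)"
    using fin by (simp add: lebesgue_integral_count_space_finite sum_divide_distrib)
  finally show ?thesis .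
qed

lemma mem_shift: "(z::real) \<in> (\<lambda>y. - t + y) ` S \<longleftrightarrow> t + z \<in> S"
proof
  assume "z \<in> (\<lambda>y. - t + y) ` S" then show "t + z \<in> S" by (auto simp: algebra_simps)
next
  assume "t + z \<in> S" then show "z \<in> (\<lambda>y. - t + y) ` S" by (rule rev_image_eqI) simp
qed

lemma ud_bound:
  assumes ud: "uniformly_discrete \<Lambda>"
  shows "\<exists>N::nat. \<forall>c. finite (\<Lambda> \<inter> {c..c+L}) \<and> card (\<Lambda> \<inter> {c..c+L}) \<le> N"
proof -
  obtain r where r: "r > 0" "\<And>x y. x \<in> \<Lambda> \<Longrightarrow> y \<in> \<Lambda> \<Longrightarrow> x \<noteq> y \<Longrightarrow> \<bar>x - y\<bar> \<ge> r"
    using ud unfolding uniformly_discrete_def by blast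
  define N where "N = card {0..nat \<lfloor>L / r\<rfloor>}"
  have "finite (\<Lambda> \<inter> {c..c+L}) \<and> card (\<Lambda> \<inter> {c..c+L}) \<le> N" for c
  proof -
    define g where "g x = nat \<lfloor>(x - c) / r\<rfloor>" for x
    have inj: "inj_on g (\<Lambda> \<inter> {c..c+L})"
    proof (rule inj_onI, rule ccontr)
      fix x y assume x: "x \<in> \<Lambda> \<inter> {c..c+L}" and y: "y \<in> \<Lambda> \<inter> {c..c+L}" and eq: "g x = g y" and ne: "x \<noteq> y"
      have xr: "(x - c) / r \<ge> 0" "(y - c) / r \<ge> 0" using x y r by auto
      have fl: "\<lfloor>(x - c) / r\<rfloor> = \<lfloor>(y - c) / r\<rfloor>"
        using eq xr unfolding g_def by (subst eq_nat_nat_iff[symmetric]) auto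
      have "\<bar>(x - c) / r - (y - c) / r\<bar> < 1"
        using fl by linarith
      then have "\<bar>x - y\<bar> / r < 1" using r(1) by (simp add: diff_divide_distrib[symmetric] abs_divide)
      then have "\<bar>x - y\<bar> < r" using r(1) by (simp add: divide_less_eq)
      with r(2)[of x y] x y ne show False by auto
    qed
    have sub: "g ` (\<Lambda> \<inter> {c..c+L}) \<subseteq> {0..nat \<lfloor>L / r\<rfloor>}"
    proof
      fix z assume "z \<in> g ` (\<Lambda> \<inter> {c..c+L})"
      then obtain x where x: "x \<in> \<Lambda> \<inter> {c..c+L}" "z = g x" by auto
      have "(x - c) / r \<le> L / r" using x r(1) by (simp add: divide_right_mono)
      then have "\<lfloor>(x - c) / r\<rfloor> \<le> \<lfloor>L / r\<rfloor>" by (rule floor_mono)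
      then show "z \<in> {0..nat \<lfloor>L / r\<rfloor>}" using x unfolding g_def by (simp add: nat_mono)
    qed
    show ?thesis
      using inj_on_finite[OF inj sub] card_inj_on_le[OF inj sub] unfolding N_def by auto
  qed
  then show ?thesis by blast
qed

lemma ud_finite:
  assumes ud: "uniformly_discrete \<Lambda>"
  shows "finite (\<Lambda> \<inter> {a..b})"
proof (cases "a \<le> b")
  case True
  from ud_bound[OF ud, of "b - a"] obtain N where "\<forall>c. finite (\<Lambda> \<inter> {c..c + (b - a)})" by blast
  then show ?thesis by (metis add.commute diff_add_cancel)
next
  case False then show ?thesis by simp
qed

lemma pairs_card:
  fixes F :: "real set"
  assumes fin: "finite F"
  shows "card {p \<in> F \<times> F. fst p - snd p = t} = card (F \<inter> (\<lambda>y. - t + y) ` F)"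
proof -
  have "snd ` {p \<in> F \<times> F. fst p - snd p = t} = F \<inter> (\<lambda>y. - t + y) ` F"
  proof (intro equalityI subsetI)
    fix z assume "z \<in> snd ` {p \<in> F \<times> F. fst p - snd p = t}"
    then obtain x where x: "x \<in> F" "z \<in> F" "x - z = t" by force
    have tz: "t + z = x" using x(3) by linarith
    have "t + z \<in> F" unfolding tz by (rule x(1))
    then have "z \<in> (\<lambda>y. - t + y) ` F" by (rule iffD2[OF mem_shift])
    then show "z \<in> F \<inter> (\<lambda>y. - t + y) ` F" using x(2) by (rule IntI[rotated])
  next
    fix z assume "z \<in> F \<inter> (\<lambda>y. - t + y) ` F"
    then have "t + z \<in> F" "z \<in> F" using mem_shift[of z t F] by auto
    then have "(t + z, z) \<in> {p \<in> F \<times> F. fst p - snd p = t}" by simp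
    then show "z \<in> snd ` {p \<in> F \<times> F. fst p - snd p = t}" by (rule rev_image_eqI) simp
  qed
  moreover have "inj_on snd {p \<in> F \<times> F. fst p - snd p = t}"
    by (rule inj_onI) (auto simp: prod_eq_iff)
  ultimately show ?thesis using card_image by fastforce
qed

lemma sum_regroup:
  fixes f :: "real \<Rightarrow> real"
  assumes fin: "finite F" and S: "finite S"
    and z: "\<And>x y. x \<in> F \<Longrightarrow> y \<in> F \<Longrightarrow> x - y \<notin> S \<Longrightarrow> f (x - y) = 0"
  shows "(\<Sum>p\<in>F \<times> F. f (fst p - snd p)) = (\<Sum>t\<in>S. f t * real (card (F \<inter> (\<lambda>y. - t + y) ` F)))"
proof -
  have "(\<Sum>p\<in>F \<times> F. f (fst p - snd p)) = (\<Sum>p\<in>{p \<in> F \<times> F. fst p - snd p \<in> S}. f (fst p - snd p))"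
  proof (rule sum.mono_neutral_right)
    show "finite (F \<times> F)" using fin by simp
    show "{p \<in> F \<times> F. fst p - snd p \<in> S} \<subseteq> F \<times> F" by auto
    show "\<forall>i\<in>F \<times> F - {p \<in> F \<times> F. fst p - snd p \<in> S}. f (fst i - snd i) = 0"
    proof
      fix i assume "i \<in> F \<times> F - {p \<in> F \<times> F. fst p - snd p \<in> S}"
      then show "f (fst i - snd i) = 0" by (intro z) auto
    qed
  qed
  also have "\<dots> = (\<Sum>t\<in>S. \<Sum>p\<in>{q \<in> {p \<in> F \<times> F. fst p - snd p \<in> S}. fst q - snd q = t}. f (fst p - snd p))"
    by (rule sum.group[symmetric]) (use fin S in auto)
  also have "\<dots> = (\<Sum>t\<in>S. \<Sum>p\<in>{p \<in> F \<times> F. fst p - snd p = t}. f t)"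
  proof (rule sum.cong[OF refl])
    fix t assume "t \<in> S"
    then have e: "{q \<in> {p \<in> F \<times> F. fst p - snd p \<in> S}. fst q - snd q = t} = {p \<in> F \<times> F. fst p - snd p = t}" by blast
    have "(\<Sum>p\<in>{p \<in> F \<times> F. fst p - snd p = t}. f (fst p - snd p)) = (\<Sum>p\<in>{p \<in> F \<times> F. fst p - snd p = t}. f t)"
      by (rule sum.cong) auto
    then show "(\<Sum>p\<in>{q \<in> {p \<in> F \<times> F. fst p - snd p \<in> S}. fst q - snd q = t}. f (fst p - snd p)) = (\<Sum>p\<in>{p \<in> F \<times> F. fst p - snd p = t}. f t)"
      unfolding e .
  qed
  also have "\<dots> = (\<Sum>t\<in>S. f t * real (card (F \<inter> (\<lambda>y. - t + y) ` F)))"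
    by (rule sum.cong) (auto simp: pairs_card[OF fin])
  finally show ?thesis .
qed


lemma part1:
  fixes \<Lambda> :: "real set" and a b :: "nat \<Rightarrow> real" and t :: real
  assumes ud: "uniformly_discrete \<Lambda>"
    and card_inf: "filterlim (\<lambda>n. card (\<Lambda> \<inter> {a n..b n})) at_top sequentially"
  shows "(\<lambda>n. (real (card (\<Lambda> \<inter> ((\<lambda>y. - t + y) ` \<Lambda>) \<inter> {a n..b n}))
                  - real (card ((\<Lambda> \<inter> {a n..b n}) \<inter> ((\<lambda>y. - t + y) ` (\<Lambda> \<inter> {a n..b n}))))) / real (card (\<Lambda> \<inter> {a n..b n})))
           \<longlonglongrightarrow> 0"
proof -
  define F where "F n = \<Lambda> \<inter> {a n..b n}" for n
  define A where "A n = \<Lambda> \<inter> ((\<lambda>y. - t + y) ` \<Lambda>) \<inter> {a n..b n}" for n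
  define B where "B n = F n \<inter> ((\<lambda>y. - t + y) ` F n)" for n
  obtain N where N: "\<And>c. finite (\<Lambda> \<inter> {c..c+\<bar>t\<bar>}) \<and> card (\<Lambda> \<inter> {c..c+\<bar>t\<bar>}) \<le> N"
    using ud_bound[OF ud, of "\<bar>t\<bar>"] by blast
  have finF: "finite (F n)" for n unfolding F_def by (rule ud_finite[OF ud])
  have AF: "A n \<subseteq> F n" for n unfolding A_def F_def by auto
  have finA: "finite (A n)" for n using finF AF by (rule finite_subset[rotated])
  have BA: "B n \<subseteq> A n" for n
  proof
    fix z assume "z \<in> B n"
    then have "z \<in> F n" "t + z \<in> F n" unfolding B_def using mem_shift[of z t "F n"] by auto
    then show "z \<in> A n" unfolding A_def F_def using mem_shift[of z t \<Lambda>] by auto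
  qed
  have finB: "finite (B n)" for n using finA BA by (rule finite_subset[rotated])
  have diff_sub: "A n - B n \<subseteq> (\<Lambda> \<inter> {a n..a n+\<bar>t\<bar>}) \<union> (\<Lambda> \<inter> {(b n - \<bar>t\<bar>)..(b n - \<bar>t\<bar>)+\<bar>t\<bar>})" for n
  proof
    fix z assume z: "z \<in> A n - B n"
    then have zL: "z \<in> \<Lambda>" "a n \<le> z" "z \<le> b n" "t + z \<in> \<Lambda>"
      unfolding A_def using mem_shift[of z t \<Lambda>] by auto
    have "\<not> (t + z \<in> F n)"
    proof
      assume "t + z \<in> F n"
      then have "z \<in> B n" unfolding B_def using zL mem_shift[of z t "F n"] by (auto simp: F_def)
      with z show False by auto
    qed
    then have "t + z < a n \<or> t + z > b n" using zL unfolding F_def by auto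
    then show "z \<in> (\<Lambda> \<inter> {a n..a n+\<bar>t\<bar>}) \<union> (\<Lambda> \<inter> {(b n - \<bar>t\<bar>)..(b n - \<bar>t\<bar>)+\<bar>t\<bar>})"
      using zL by auto
  qed
  have dle: "card (A n - B n) \<le> 2 * N" for n
  proof -
    have "card (A n - B n) \<le> card ((\<Lambda> \<inter> {a n..a n+\<bar>t\<bar>}) \<union> (\<Lambda> \<inter> {(b n - \<bar>t\<bar>)..(b n - \<bar>t\<bar>)+\<bar>t\<bar>}))"
      by (rule card_mono[OF _ diff_sub]) (use N[of "a n"] N[of "b n - \<bar>t\<bar>"] in auto)
    also have "\<dots> \<le> card (\<Lambda> \<inter> {a n..a n+\<bar>t\<bar>}) + card (\<Lambda> \<inter> {(b n - \<bar>t\<bar>)..(b n - \<bar>t\<bar>)+\<bar>t\<bar>})"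
      by (rule card_Un_le)
    also have "\<dots> \<le> 2 * N" using N[of "a n"] N[of "b n - \<bar>t\<bar>"] by linarith
    finally show ?thesis .
  qed
  have deq: "real (card (A n)) - real (card (B n)) = real (card (A n - B n))" for n
    using card_Diff_subset[OF finB BA] card_mono[OF finA BA] by simp
  have cinf: "filterlim (\<lambda>n. real (card (F n))) at_infinity sequentially"
    using filterlim_at_top_imp_at_infinity[OF filterlim_compose[OF filterlim_real_sequentially card_inf]]
    unfolding F_def by (simp add: comp_def)
  have g0: "(\<lambda>n. real (2 * N) / real (card (F n))) \<longlonglongrightarrow> 0"
    by (rule tendsto_divide_0[OF tendsto_const cinf])
  have "(\<lambda>n. (real (card (A n)) - real (card (B n))) / real (card (F n))) \<longlonglongrightarrow> 0"
  proof (rule Lim_null_comparison[OF _ g0])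
    show "\<forall>\<^sub>F n in sequentially. norm ((real (card (A n)) - real (card (B n))) / real (card (F n))) \<le> real (2 * N) / real (card (F n))"
    proof (rule always_eventually, rule allI)
      fix n
      have "norm ((real (card (A n)) - real (card (B n))) / real (card (F n))) = real (card (A n - B n)) / real (card (F n))"
        by (simp add: deq)
      also have "\<dots> \<le> real (2 * N) / real (card (F n))"
        by (rule divide_right_mono) (use dle[of n] in auto)
      finally show "norm ((real (card (A n)) - real (card (B n))) / real (card (F n))) \<le> real (2 * N) / real (card (F n))" .
    qed
  qed
  then show ?thesis unfolding A_def B_def F_def .
qed


definition ramp :: "real \<Rightarrow> real \<Rightarrow> nat \<Rightarrow> real \<Rightarrow> real" where
  "ramp a b k x = max 0 (min 1 (min ((real k + 1) * (x - a)) (1 - (real k + 1) * (x - b))))"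

lemma ramp_cont: "continuous_on UNIV (ramp a b k)"
  unfolding ramp_def by (intro continuous_intros)

lemma ramp_supp: "ramp a b k x \<noteq> 0 \<Longrightarrow> x \<in> {a..b+1}"
proof -
  assume ne: "ramp a b k x \<noteq> 0"
  then have "min 1 (min ((real k + 1) * (x - a)) (1 - (real k + 1) * (x - b))) > 0"
    unfolding ramp_def by (auto simp: max_def split: if_splits)
  then have 1: "(real k + 1) * (x - a) > 0" and 2: "1 - (real k + 1) * (x - b) > 0"
    by auto
  from 1 have "x > a" by (simp add: zero_less_mult_iff)
  moreover have "x < b + 1"
  proof (rule ccontr)
    assume "\<not> x < b + 1"
    then have "x - b \<ge> 1" by simp
    then have "(real k + 1) * (x - b) \<ge> (real k + 1) * 1" by (intro mult_left_mono) auto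
    with 2 show False by (smt (verit) of_nat_0_le_iff)
  qed
  ultimately show ?thesis by simp
qed

lemma ramp_cc: "compact (closure {x. ramp a b k x \<noteq> 0})"
  unfolding compact_closure
  by (rule bounded_subset[of "{a..b+1}"]) (auto dest: ramp_supp)

lemma ramp_bound: "\<bar>ramp a b k x\<bar> \<le> indicator {a..b+1} x"
proof (cases "ramp a b k x = 0")
  case True then show ?thesis by simp
next
  case False
  then have "x \<in> {a..b+1}" by (rule ramp_supp)
  moreover have "\<bar>ramp a b k x\<bar> \<le> 1" unfolding ramp_def by auto
  ultimately show ?thesis by simp
qed

lemma ramp_lim:
  assumes ab: "a < b"
  shows "(\<lambda>k. ramp a b k x) \<longlonglongrightarrow> indicator {a<..b} x"
proof (rule tendsto_eventually)
  show "\<forall>\<^sub>F k in sequentially. ramp a b k x = indicator {a<..b} x"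
  proof (cases "x \<le> a")
    case True
    then have "ramp a b k x = 0" for k
    proof -
      have "(real k + 1) * (x - a) \<le> 0" using True by (intro mult_nonneg_nonpos) auto
      then show ?thesis unfolding ramp_def by auto
    qed
    then show ?thesis using True by simp
  next
    case False
    obtain K :: nat where K: "1 / (x - a) < real K" "1 / \<bar>x - b\<bar> < real K" using reals_Archimedean2
      by (metis max.strict_boundedE of_nat_max reals_Archimedean2)
    show ?thesis
    proof (rule eventually_sequentiallyI[of K])
      fix k assume k: "K \<le> k"
      have xa: "x - a > 0" using False by simp
      have "1 < real K * (x - a)" using K(1) xa by (simp add: divide_less_eq mult.commute)
      also have "\<dots> \<le> (real k + 1) * (x - a)" using k xa by (intro mult_right_mono) auto
      finally have A: "1 < (real k + 1) * (x - a)" .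
      show "ramp a b k x = indicator {a<..b} x"
      proof (cases "x \<le> b")
        case True
        have "(real k + 1) * (x - b) \<le> 0" using True by (intro mult_nonneg_nonpos) auto
        then show ?thesis using A True False unfolding ramp_def by auto
      next
        case xb: False
        have xb': "x - b > 0" using xb by simp
        have "1 < real K * (x - b)" using K(2) xb' by (simp add: divide_less_eq mult.commute)
        also have "\<dots> \<le> (real k + 1) * (x - b)" using k xb' by (intro mult_right_mono) auto
        finally have "1 < (real k + 1) * (x - b)" .
        then show ?thesis using xb unfolding ramp_def by auto
      qed
    qed
  qed
qed

lemma ramp_integral_lim:
  assumes M: "radon_measure M" and ab: "a < b"
  shows "(\<lambda>k. integral\<^sup>L M (ramp a b k)) \<longlonglongrightarrow> measure M {a<..b}"
proof -
  have sM: "sets M = sets borel" using M unfolding radon_measure_def by simp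
  have spM: "space M = UNIV" using sets_eq_imp_space_eq[OF sM] by simp
  have measeq: "borel_measurable M = borel_measurable borel" by (rule measurable_cong_sets[OF sM refl])
  have meas: "h \<in> borel_measurable M" if "h \<in> borel_measurable borel" for h
    using that unfolding measeq .
  have fin: "emeasure M {a..b+1} < \<infinity>" using M unfolding radon_measure_def by auto
  have "(\<lambda>k. integral\<^sup>L M (ramp a b k)) \<longlonglongrightarrow> integral\<^sup>L M (indicator {a<..b})"
  proof (rule integral_dominated_convergence[where w = "indicator {a..b+1}"])
    show "indicator {a<..b} \<in> borel_measurable M" by (rule meas) simp
    show "ramp a b k \<in> borel_measurable M" for k
      by (rule meas, rule borel_measurable_continuous_onI, rule ramp_cont)
    show "integrable M (indicator {a..b+1} :: real \<Rightarrow> real)"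
      by (rule integrable_real_indicator) (use sM fin in auto)
    show "AE x in M. (\<lambda>k. ramp a b k x) \<longlonglongrightarrow> indicator {a<..b} x"
      using ramp_lim[OF ab] by simp
    show "AE x in M. norm (ramp a b k x) \<le> indicator {a..b+1} x" for k
      using ramp_bound by simp
  qed
  then show ?thesis using spM by simp
qed

lemma vague_unique:
  assumes M: "radon_measure M" and N: "radon_measure N"
    and eq: "\<And>f :: real \<Rightarrow> real. continuous_on UNIV f \<Longrightarrow> compact (closure {x. f x \<noteq> 0}) \<Longrightarrow> integral\<^sup>L M f = integral\<^sup>L N f"
  shows "M = N"
proof (rule measure_eqI_generator_eq[where \<Omega>=UNIV and E="range (\<lambda>(a, b). {a<..b::real})" and A="\<lambda>i. {- real i<..real i}"])
  have sM: "sets M = sets borel" and sN: "sets N = sets borel" using M N unfolding radon_measure_def by auto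
  have finM: "emeasure M {c..d} < \<infinity>" for c d using M unfolding radon_measure_def by auto
  have finN: "emeasure N {c..d} < \<infinity>" for c d using N unfolding radon_measure_def by auto
  show "Int_stable (range (\<lambda>(a, b). {a<..b::real}))" by (auto simp: Int_stable_def)
  show "range (\<lambda>(a, b). {a<..b::real}) \<subseteq> Pow UNIV" by auto
  show "sets M = sigma_sets UNIV (range (\<lambda>(a, b). {a<..b::real}))" using sM by (simp add: borel_sigma_sets_Ioc)
  show "sets N = sigma_sets UNIV (range (\<lambda>(a, b). {a<..b::real}))" using sN by (simp add: borel_sigma_sets_Ioc)
  show "range (\<lambda>i. {- real i<..real i}) \<subseteq> range (\<lambda>(a, b). {a<..b::real})" by auto
  show "(\<Union>i. {- real i<..real i}) = UNIV"
  proof (intro equalityI subsetI)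
    fix x :: real
    obtain n :: nat where "\<bar>x\<bar> < real n" using reals_Archimedean2 by blast
    then show "x \<in> (\<Union>i. {- real i<..real i})" by (intro UN_I[of n]) auto
  qed auto
  show "emeasure M {- real i<..real i} \<noteq> \<infinity>" for i
  proof -
    have "emeasure M {- real i<..real i} \<le> emeasure M {- real i..real i}"
      by (rule emeasure_mono) (auto simp: sM)
    then show ?thesis using finM[of "- real i" "real i"] by (auto simp: top_unique)
  qed
  fix X assume "X \<in> range (\<lambda>(a, b). {a<..b::real})"
  then obtain a b where X: "X = {a<..b}" by auto
  show "emeasure M X = emeasure N X"
  proof (cases "a < b")
    case False then show ?thesis using X by simp
  next
    case True
    have "measure M {a<..b} = measure N {a<..b}"
    proof (rule LIMSEQ_unique[OF ramp_integral_lim[OF M True]])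
      show "(\<lambda>k. integral\<^sup>L M (ramp a b k)) \<longlonglongrightarrow> measure N {a<..b}"
      proof -
        have "integral\<^sup>L M (ramp a b k) = integral\<^sup>L N (ramp a b k)" for k
          by (rule eq) (rule ramp_cont, rule ramp_cc)
        then show ?thesis using ramp_integral_lim[OF N True] by simp
      qed
    qed
    moreover have "emeasure M {a<..b} \<noteq> \<infinity>"
    proof -
      have "emeasure M {a<..b} \<le> emeasure M {a..b}" by (rule emeasure_mono) (auto simp: sM)
      then show ?thesis using finM[of a b] by (auto simp: top_unique)
    qed
    moreover have "emeasure N {a<..b} \<noteq> \<infinity>"
    proof -
      have "emeasure N {a<..b} \<le> emeasure N {a..b}" by (rule emeasure_mono) (auto simp: sN)
      then show ?thesis using finN[of a b] by (auto simp: top_unique)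
    qed
    ultimately show ?thesis using X by (simp add: emeasure_eq_ennreal_measure)
  qed
qed


definition discmeas :: "real set \<Rightarrow> (real \<Rightarrow> real) \<Rightarrow> real measure" where
  "discmeas D h = distr (density (count_space UNIV) (\<lambda>t. ennreal (if t \<in> D then h t else 0))) borel (\<lambda>x. x)"

lemma sets_discmeas[simp]: "sets (discmeas D h) = sets borel"
  unfolding discmeas_def by simp

lemma emeasure_discmeas:
  assumes A: "A \<in> sets borel"
  shows "emeasure (discmeas D h) A = (\<integral>\<^sup>+ t. ennreal (h t) \<partial>count_space (D \<inter> A))"
proof -
  let ?g = "\<lambda>t. ennreal (if t \<in> D then h t else 0)"
  have meas: "(\<lambda>x. x) \<in> measurable (density (count_space UNIV) ?g) borel"
    by (subst measurable_cong_sets[OF sets_density refl]) simp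
  have "emeasure (discmeas D h) A = emeasure (density (count_space UNIV) ?g) A"
    unfolding discmeas_def using emeasure_distr[OF meas A] by simp
  also have "\<dots> = (\<integral>\<^sup>+ x. ?g x * indicator A x \<partial>count_space UNIV)"
    by (rule emeasure_density) auto
  also have "\<dots> = (\<integral>\<^sup>+ x. ennreal (h x) * indicator (D \<inter> A) x \<partial>count_space UNIV)"
    by (rule nn_integral_cong) (auto simp: indicator_def)
  also have "\<dots> = (\<integral>\<^sup>+ t. ennreal (h t) \<partial>count_space (D \<inter> A))"
    by (rule nn_integral_count_space_indicator[symmetric]) simp
  finally show ?thesis .
qed

lemma integral_count_space_fs:
  fixes k :: "real \<Rightarrow> real"
  assumes S: "finite S" and z: "\<And>x. x \<notin> S \<Longrightarrow> k x = 0"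
  shows "integral\<^sup>L (count_space UNIV) k = (\<Sum>x\<in>S. k x)"
proof -
  have sub: "{a \<in> UNIV. k a \<noteq> 0} \<subseteq> S" using z by blast
  have fin: "finite {a \<in> UNIV. k a \<noteq> 0}" using S sub by (rule finite_subset[rotated])
  have "integral\<^sup>L (count_space UNIV) k = (\<Sum>a | a \<in> UNIV \<and> k a \<noteq> 0. k a)"
    by (rule lebesgue_integral_count_space_finite_support) (use fin in simp)
  also have "\<dots> = (\<Sum>x\<in>S. k x)"
    by (rule sum.mono_neutral_left) (use S sub in auto)
  finally show ?thesis .
qed

lemma integral_discmeas:
  fixes f :: "real \<Rightarrow> real"
  assumes f: "f \<in> borel_measurable borel" and h: "\<And>t. 0 \<le> h t"
    and S: "finite S" and z: "\<And>x. x \<in> D \<Longrightarrow> x \<notin> S \<Longrightarrow> f x = 0" and SD: "S \<subseteq> D"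
  shows "integral\<^sup>L (discmeas D h) f = (\<Sum>t\<in>S. h t * f t)"
proof -
  let ?g = "\<lambda>t. if t \<in> D then h t else 0"
  have meas: "(\<lambda>x. x) \<in> measurable (density (count_space UNIV) (\<lambda>t. ennreal (?g t))) borel"
    by (subst measurable_cong_sets[OF sets_density refl]) simp
  have "integral\<^sup>L (discmeas D h) f = integral\<^sup>L (density (count_space UNIV) (\<lambda>t. ennreal (?g t))) f"
    unfolding discmeas_def by (subst integral_distr[OF meas f]) simp
  also have "\<dots> = integral\<^sup>L (count_space UNIV) (\<lambda>x. ?g x *\<^sub>R f x)"
    by (rule integral_density) (auto simp: h)
  also have "\<dots> = (\<Sum>t\<in>S. ?g t *\<^sub>R f t)"
    by (rule integral_count_space_fs[OF S]) (auto simp: z)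
  also have "\<dots> = (\<Sum>t\<in>S. h t * f t)"
    by (rule sum.cong) (use SD in auto)
  finally show ?thesis .
qed

lemma radon_discmeas:
  assumes fin: "\<And>K. compact K \<Longrightarrow> finite (K \<inter> D)" and h: "\<And>t. 0 \<le> h t"
  shows "radon_measure (discmeas D h)"
  unfolding radon_measure_def
proof (intro conjI allI impI)
  show "sets (discmeas D h) = sets borel" by simp
  fix K :: "real set" assume K: "compact K"
  have "emeasure (discmeas D h) K = (\<integral>\<^sup>+ t. ennreal (h t) \<partial>count_space (D \<inter> K))"
    by (rule emeasure_discmeas) (use K in \<open>simp add: borel_compact\<close>)
  also have "\<dots> = (\<Sum>t\<in>D \<inter> K. ennreal (h t))"
    by (rule nn_integral_count_space_finite) (use fin[OF K] in \<open>simp add: Int_commute\<close>)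
  also have "\<dots> < \<infinity>" using h by simp
  finally show "emeasure (discmeas D h) K < \<infinity>" .
qed


lemma vague_apply:
  fixes f :: "real \<Rightarrow> real"
  assumes "vague_limit \<mu>s \<mu>" "continuous_on UNIV f" "compact (closure {x. f x \<noteq> 0})"
  shows "(\<lambda>n. integral\<^sup>L (\<mu>s n) f) \<longlonglongrightarrow> integral\<^sup>L \<mu> f"
  using assms unfolding vague_limit_def by blast

theorem lemma3p16:
  fixes \<Lambda> :: "real set" and a b :: "nat \<Rightarrow> real"
  defines "F \<equiv> (\<lambda>n. \<Lambda> \<inter> {a n..b n})"
  assumes ud: "uniformly_discrete \<Lambda>"
    and ab: "\<And>n. a n \<le> b n"
    and vanHove: "filterlim (\<lambda>n. b n - a n) at_top sequentially"
    and card_inf: "filterlim (\<lambda>n. card (F n)) at_top sequentially"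
  shows "(\<forall>t \<in> diffset \<Lambda>.
           (\<lambda>n. (real (card (\<Lambda> \<inter> ((\<lambda>y. - t + y) ` \<Lambda>) \<inter> {a n..b n}))
                  - real (card (F n \<inter> ((\<lambda>y. - t + y) ` F n)))) / real (card (F n)))
           \<longlonglongrightarrow> 0)
    \<and> (finite_local_complexity \<Lambda> \<longrightarrow>
         ((\<exists>\<gamma>. vague_limit (\<lambda>n. autocorr_measure (F n)) \<gamma>) \<longleftrightarrow>
            (\<forall>t. convergent (\<lambda>n. real (card (F n \<inter> ((\<lambda>y. - t + y) ` \<Lambda>))) / real (card (F n)))))
       \<and> (\<forall>\<gamma>. vague_limit (\<lambda>n. autocorr_measure (F n)) \<gamma> \<longrightarrow>
            (\<forall>A \<in> sets borel. emeasure \<gamma> A =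
               (\<integral>\<^sup>+ t. ennreal (lim (\<lambda>n. real (card (F n \<inter> ((\<lambda>y. - t + y) ` \<Lambda>))) / real (card (F n))))
                 \<partial>count_space (diffset \<Lambda> \<inter> A)))))"
proof -
  define D where "D = diffset \<Lambda>"
  define eta where "eta n t = real (card (F n \<inter> ((\<lambda>y. - t + y) ` \<Lambda>))) / real (card (F n))" for n t
  define c where "c n t = real (card (F n \<inter> ((\<lambda>y. - t + y) ` F n))) / real (card (F n))" for n t
  have finF: "finite (F n)" for n unfolding F_def by (rule ud_finite[OF ud])
  have FL: "F n \<subseteq> \<Lambda>" for n unfolding F_def by auto
  have card_inf': "filterlim (\<lambda>n. card (\<Lambda> \<inter> {a n..b n})) at_top sequentially"
    using card_inf unfolding F_def .
  have P1: "(\<lambda>n. (real (card (\<Lambda> \<inter> ((\<lambda>y. - t + y) ` \<Lambda>) \<inter> {a n..b n}))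
                  - real (card (F n \<inter> ((\<lambda>y. - t + y) ` F n)))) / real (card (F n)))
           \<longlonglongrightarrow> 0" for t
    unfolding F_def by (rule part1[OF ud card_inf'])
  have seteq: "\<Lambda> \<inter> ((\<lambda>y. - t + y) ` \<Lambda>) \<inter> {a n..b n} = F n \<inter> ((\<lambda>y. - t + y) ` \<Lambda>)" for t n
    unfolding F_def by blast
  have diff0: "(\<lambda>n. eta n t - c n t) \<longlonglongrightarrow> 0" for t
    using P1[of t] unfolding eta_def c_def seteq by (simp add: diff_divide_distrib)
  have notD: "F n \<inter> ((\<lambda>y. - t + y) ` \<Lambda>) = {}" if "t \<notin> D" for n t
  proof (rule ccontr)
    assume "F n \<inter> ((\<lambda>y. - t + y) ` \<Lambda>) \<noteq> {}"
    then obtain z where z: "z \<in> F n" "z \<in> (\<lambda>y. - t + y) ` \<Lambda>" by blast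
    have z1: "t + z \<in> \<Lambda>" using z(2) by (rule mem_shift[THEN iffD1])
    have z2: "z \<in> \<Lambda>" using z(1) FL[of n] by blast
    have "t = (t + z) - z" by simp
    then have "t \<in> D" unfolding D_def diffset_def using z1 z2 by blast
    with that show False by simp
  qed
  have eta_nn: "0 \<le> eta n t" for n t unfolding eta_def by simp
  have int_formula: "integral\<^sup>L (autocorr_measure (F n)) f = (\<Sum>t\<in>S. f t * c n t)"
    if f: "f \<in> borel_measurable borel" and S: "finite S" and z: "\<And>x. x \<in> D \<Longrightarrow> x \<notin> S \<Longrightarrow> f x = 0"
    for f :: "real \<Rightarrow> real" and S n
  proof -
    have hs: "(\<Sum>p\<in>F n \<times> F n. f (fst p - snd p)) = (\<Sum>t\<in>S. f t * real (card (F n \<inter> (\<lambda>y. - t + y) ` F n)))"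
    proof (rule sum_regroup[OF finF S])
      fix x y assume "x \<in> F n" "y \<in> F n" "x - y \<notin> S"
      moreover have "x \<in> \<Lambda>" "y \<in> \<Lambda>" using \<open>x \<in> F n\<close> \<open>y \<in> F n\<close> FL[of n] by auto
      then have "x - y \<in> D" unfolding D_def diffset_def by blast
      ultimately show "f (x - y) = 0" using z by blast
    qed
    have "integral\<^sup>L (autocorr_measure (F n)) f = (\<Sum>p\<in>F n \<times> F n. f (fst p - snd p)) / real (card (F n))"
      by (rule autocorr_integral[OF finF f])
    also have "\<dots> = (\<Sum>t\<in>S. f t * real (card (F n \<inter> (\<lambda>y. - t + y) ` F n))) / real (card (F n))"
      by (simp only: hs)
    also have "\<dots> = (\<Sum>t\<in>S. f t * c n t)"
      unfolding c_def by (simp add: sum_divide_distrib)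
    finally show ?thesis .
  qed
  have cc: "f \<in> borel_measurable borel \<and> finite (closure {x. f x \<noteq> 0} \<inter> D) \<and> (\<forall>x. x \<notin> closure {x. f x \<noteq> 0} \<inter> D \<longrightarrow> x \<in> D \<longrightarrow> f x = 0)"
    if FLC: "finite_local_complexity \<Lambda>" and f: "continuous_on UNIV f" "compact (closure {x. f x \<noteq> 0})"
    for f :: "real \<Rightarrow> real"
  proof (intro conjI allI impI)
    show "f \<in> borel_measurable borel" by (rule borel_measurable_continuous_onI[OF f(1)])
    from FLC have "\<forall>K. compact K \<longrightarrow> finite (K \<inter> diffset \<Lambda>)" unfolding finite_local_complexity_def .
    then show "finite (closure {x. f x \<noteq> 0} \<inter> D)" using f(2) unfolding D_def by simp
    fix x assume x: "x \<notin> closure {x. f x \<noteq> 0} \<inter> D" "x \<in> D"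
    then have "x \<notin> closure {x. f x \<noteq> 0}" by simp
    then have "x \<notin> {x. f x \<noteq> 0}" using closure_subset[of "{x. f x \<noteq> 0}"] by blast
    then show "f x = 0" by simp
  qed
  have conv_of_vague: "convergent (\<lambda>n. eta n t)"
    if FLC: "finite_local_complexity \<Lambda>" and V: "vague_limit (\<lambda>n. autocorr_measure (F n)) \<gamma>" for \<gamma> t
  proof (cases "t \<in> D")
    case False
    then have "eta n t = 0" for n unfolding eta_def using notD[OF False] by simp
    then show ?thesis by (simp add: convergent_const)
  next
    case True
    from FLC have "\<forall>K. compact K \<longrightarrow> finite (K \<inter> diffset \<Lambda>)" unfolding finite_local_complexity_def .
    then have finc: "finite (cball t 1 \<inter> D)" unfolding D_def by simp
    obtain d where d: "d > 0" "\<And>x. x \<in> cball t 1 \<inter> D \<Longrightarrow> x \<noteq> t \<Longrightarrow> d \<le> dist t x"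
      using finite_set_avoid[OF finc, of t] by blast
    define \<delta> where "\<delta> = min d 1"
    have \<delta>: "\<delta> > 0" "\<delta> \<le> d" "\<delta> \<le> 1" unfolding \<delta>_def using d(1) by auto
    define f where "f x = max 0 (1 - \<bar>x - t\<bar> / \<delta>)" for x
    have fc: "continuous_on UNIV f" unfolding f_def by (intro continuous_intros) (use \<delta> in auto)
    have fsupp: "{x. f x \<noteq> 0} \<subseteq> cball t \<delta>"
    proof
      fix x assume "x \<in> {x. f x \<noteq> 0}"
      have m: "max 0 u \<noteq> 0 \<Longrightarrow> u > 0" for u :: real by (auto simp: max_def split: if_splits)
      from \<open>x \<in> {x. f x \<noteq> 0}\<close> have "f x \<noteq> 0" by simp
      then have "max 0 (1 - \<bar>x - t\<bar> / \<delta>) \<noteq> 0" unfolding f_def .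
      then have "1 - \<bar>x - t\<bar> / \<delta> > 0" by (rule m)
      then have "\<bar>x - t\<bar> < \<delta>" using \<delta>(1) by (simp add: divide_less_eq)
      then show "x \<in> cball t \<delta>" by (simp add: dist_real_def abs_minus_commute)
    qed
    have fcc: "compact (closure {x. f x \<noteq> 0})"
      unfolding compact_closure by (rule bounded_subset[OF bounded_cball fsupp])
    have fz: "f x = 0" if "x \<in> D" "x \<notin> {t}" for x
    proof (rule ccontr)
      assume "f x \<noteq> 0"
      then have "x \<in> cball t \<delta>" using fsupp by blast
      then have "x \<in> cball t 1 \<inter> D" using that(1) \<delta>(3) by auto
      then have "d \<le> dist t x" using d(2) that(2) by blast
      moreover have "dist t x \<le> \<delta>" using \<open>x \<in> cball t \<delta>\<close> by simp
      ultimately have "dist t x = \<delta>" using \<delta>(2) by simp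
      then have "\<bar>x - t\<bar> / \<delta> = 1" using \<delta>(1) by (simp add: dist_real_def abs_minus_commute)
      then have e: "1 - \<bar>x - t\<bar> / \<delta> = 0" by linarith
      have "f x = 0" unfolding f_def e by simp
      with \<open>f x \<noteq> 0\<close> show False by simp
    qed
    have ft: "f t = 1" unfolding f_def by simp
    have "integral\<^sup>L (autocorr_measure (F n)) f = (\<Sum>s\<in>{t}. f s * c n s)" for n
      by (rule int_formula) (use fz borel_measurable_continuous_onI[OF fc] in auto)
    then have ic: "integral\<^sup>L (autocorr_measure (F n)) f = c n t" for n using ft by simp
    have "(\<lambda>n. integral\<^sup>L (autocorr_measure (F n)) f) \<longlonglongrightarrow> integral\<^sup>L \<gamma> f"
      by (rule vague_apply[OF V fc fcc])
    then have "(\<lambda>n. c n t) \<longlonglongrightarrow> integral\<^sup>L \<gamma> f" unfolding ic .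
    from tendsto_add[OF this diff0[of t]] have "(\<lambda>n. eta n t) \<longlonglongrightarrow> integral\<^sup>L \<gamma> f" by simp
    then show ?thesis unfolding convergent_def by blast
  qed
  define h where "h t = max 0 (lim (\<lambda>n. eta n t))" for t
  have vague_of_conv: "vague_limit (\<lambda>n. autocorr_measure (F n)) (discmeas D h)"
    and h_eq: "\<And>t. h t = lim (\<lambda>n. eta n t)"
    if FLC: "finite_local_complexity \<Lambda>" and C: "\<forall>t. convergent (\<lambda>n. eta n t)"
  proof -
    have etalim: "(\<lambda>n. eta n t) \<longlonglongrightarrow> lim (\<lambda>n. eta n t)" for t
      using C by (simp add: convergent_LIMSEQ_iff)
    have limnn: "0 \<le> lim (\<lambda>n. eta n t)" for t
      by (rule LIMSEQ_le_const[OF etalim]) (use eta_nn in auto)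
    show heq: "h t = lim (\<lambda>n. eta n t)" for t unfolding h_def using limnn[of t] by simp
    have clim: "(\<lambda>n. c n t) \<longlonglongrightarrow> h t" for t
      using tendsto_diff[OF etalim[of t] diff0[of t]] heq[of t] by simp
    have hnn: "0 \<le> h t" for t unfolding h_def by simp
    from FLC have flc: "\<forall>K. compact K \<longrightarrow> finite (K \<inter> diffset \<Lambda>)" unfolding finite_local_complexity_def .
    show "vague_limit (\<lambda>n. autocorr_measure (F n)) (discmeas D h)"
      unfolding vague_limit_def
    proof (intro conjI allI impI)
      show "radon_measure (discmeas D h)"
        by (rule radon_discmeas) (use flc hnn in \<open>auto simp: D_def\<close>)
      fix f :: "real \<Rightarrow> real" assume f: "continuous_on UNIV f \<and> compact (closure {x. f x \<noteq> 0})"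
      define S where "S = closure {x. f x \<noteq> 0} \<inter> D"
      note ccf0 = cc[OF FLC conjunct1[OF f] conjunct2[OF f], folded S_def]
      have ccf: "f \<in> borel_measurable borel" "finite S" "\<And>x. x \<in> D \<Longrightarrow> x \<notin> S \<Longrightarrow> f x = 0"
        using ccf0 by blast+
      have "integral\<^sup>L (autocorr_measure (F n)) f = (\<Sum>t\<in>S. f t * c n t)" for n
        by (rule int_formula[OF ccf])
      moreover have "(\<lambda>n. \<Sum>t\<in>S. f t * c n t) \<longlonglongrightarrow> (\<Sum>t\<in>S. f t * h t)"
        by (rule tendsto_sum) (rule tendsto_mult[OF tendsto_const clim])
      moreover have "integral\<^sup>L (discmeas D h) f = (\<Sum>t\<in>S. h t * f t)"
        by (rule integral_discmeas[OF ccf(1) hnn ccf(2) ccf(3)]) (auto simp: S_def)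
      moreover have "(\<Sum>t\<in>S. h t * f t) = (\<Sum>t\<in>S. f t * h t)"
        by (rule sum.cong[OF refl]) (rule mult.commute)
      ultimately show "(\<lambda>n. integral\<^sup>L (autocorr_measure (F n)) f) \<longlonglongrightarrow> integral\<^sup>L (discmeas D h) f"
        by simp
    qed
  qed
  have part2: "((\<exists>\<gamma>. vague_limit (\<lambda>n. autocorr_measure (F n)) \<gamma>) \<longleftrightarrow> (\<forall>t. convergent (\<lambda>n. eta n t)))
       \<and> (\<forall>\<gamma>. vague_limit (\<lambda>n. autocorr_measure (F n)) \<gamma> \<longrightarrow>
            (\<forall>A \<in> sets borel. emeasure \<gamma> A = (\<integral>\<^sup>+ t. ennreal (lim (\<lambda>n. eta n t)) \<partial>count_space (D \<inter> A))))"
    if FLC: "finite_local_complexity \<Lambda>"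
  proof (intro conjI)
    show "(\<exists>\<gamma>. vague_limit (\<lambda>n. autocorr_measure (F n)) \<gamma>) \<longleftrightarrow> (\<forall>t. convergent (\<lambda>n. eta n t))"
    proof
      assume "\<exists>\<gamma>. vague_limit (\<lambda>n. autocorr_measure (F n)) \<gamma>"
      then obtain \<gamma> where "vague_limit (\<lambda>n. autocorr_measure (F n)) \<gamma>" by blast
      then show "\<forall>t. convergent (\<lambda>n. eta n t)" using conv_of_vague[OF FLC] by blast
    next
      assume "\<forall>t. convergent (\<lambda>n. eta n t)"
      then show "\<exists>\<gamma>. vague_limit (\<lambda>n. autocorr_measure (F n)) \<gamma>" using vague_of_conv[OF FLC] by blast
    qed
  next
    show "\<forall>\<gamma>. vague_limit (\<lambda>n. autocorr_measure (F n)) \<gamma> \<longrightarrow>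
            (\<forall>A \<in> sets borel. emeasure \<gamma> A = (\<integral>\<^sup>+ t. ennreal (lim (\<lambda>n. eta n t)) \<partial>count_space (D \<inter> A)))"
    proof (intro allI impI ballI)
    fix \<gamma> and A :: "real set" assume V: "vague_limit (\<lambda>n. autocorr_measure (F n)) \<gamma>" and A: "A \<in> sets borel"
    have C: "\<forall>t. convergent (\<lambda>n. eta n t)" using conv_of_vague[OF FLC V] by blast
    have V2: "vague_limit (\<lambda>n. autocorr_measure (F n)) (discmeas D h)" by (rule vague_of_conv[OF FLC C])
    have "\<gamma> = discmeas D h"
    proof (rule vague_unique)
      show "radon_measure \<gamma>" using V unfolding vague_limit_def by blast
      show "radon_measure (discmeas D h)" using V2 unfolding vague_limit_def by blast
      fix f :: "real \<Rightarrow> real" assume "continuous_on UNIV f" "compact (closure {x. f x \<noteq> 0})"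
      note fcc = this
      have "(\<lambda>n. integral\<^sup>L (autocorr_measure (F n)) f) \<longlonglongrightarrow> integral\<^sup>L \<gamma> f"
        by (rule vague_apply[OF V fcc])
      moreover have "(\<lambda>n. integral\<^sup>L (autocorr_measure (F n)) f) \<longlonglongrightarrow> integral\<^sup>L (discmeas D h) f"
        by (rule vague_apply[OF V2 fcc])
      ultimately show "integral\<^sup>L \<gamma> f = integral\<^sup>L (discmeas D h) f" by (rule LIMSEQ_unique)
    qed
    then have "emeasure \<gamma> A = (\<integral>\<^sup>+ t. ennreal (h t) \<partial>count_space (D \<inter> A))"
      using emeasure_discmeas[OF A] by simp
    also have "\<dots> = (\<integral>\<^sup>+ t. ennreal (lim (\<lambda>n. eta n t)) \<partial>count_space (D \<inter> A))"
      using h_eq[OF FLC C] by simp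
    finally show "emeasure \<gamma> A = (\<integral>\<^sup>+ t. ennreal (lim (\<lambda>n. eta n t)) \<partial>count_space (D \<inter> A))" .
  qed
  qed
  have part1': "\<forall>t \<in> diffset \<Lambda>.
           (\<lambda>n. (real (card (\<Lambda> \<inter> ((\<lambda>y. - t + y) ` \<Lambda>) \<inter> {a n..b n}))
                  - real (card (F n \<inter> ((\<lambda>y. - t + y) ` F n)))) / real (card (F n)))
           \<longlonglongrightarrow> 0"
    using P1 by blast
  show ?thesis
  proof (intro conjI impI)
    show "\<forall>t \<in> diffset \<Lambda>.
           (\<lambda>n. (real (card (\<Lambda> \<inter> ((\<lambda>y. - t + y) ` \<Lambda>) \<inter> {a n..b n}))
                  - real (card (F n \<inter> ((\<lambda>y. - t + y) ` F n)))) / real (card (F n)))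
           \<longlonglongrightarrow> 0" by (rule part1')
    assume FLC: "finite_local_complexity \<Lambda>"
    show "(\<exists>\<gamma>. vague_limit (\<lambda>n. autocorr_measure (F n)) \<gamma>) \<longleftrightarrow>
            (\<forall>t. convergent (\<lambda>n. real (card (F n \<inter> ((\<lambda>y. - t + y) ` \<Lambda>))) / real (card (F n))))"
      using conjunct1[OF part2[OF FLC]] unfolding eta_def .
    show "\<forall>\<gamma>. vague_limit (\<lambda>n. autocorr_measure (F n)) \<gamma> \<longrightarrow>
            (\<forall>A \<in> sets borel. emeasure \<gamma> A =
               (\<integral>\<^sup>+ t. ennreal (lim (\<lambda>n. real (card (F n \<inter> ((\<lambda>y. - t + y) ` \<Lambda>))) / real (card (F n))))
                 \<partial>count_space (diffset \<Lambda> \<inter> A)))"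
      using conjunct2[OF part2[OF FLC]] unfolding eta_def D_def .
  qed
qed

end
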